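(* Let $\mathcal P$ be an $\mathsf{NPO}\text{-}\mathsf{PB}$ problem. Then there is a polynomial $q$ such that for every instance of $\mathcal P$ of input size $s$, the DLA of QWOA for that instance satisfies $\dim(\mathfrak g_{\mathrm{QWOA},\mathcal P})\le q(s)$; i.e. $\dim(\mathfrak g_{\mathrm{QWOA},\mathcal P})=\mathcal O(\mathrm{poly}(s))$.
   Context: An instance of a combinatorial optimization problem consists of a finite nonempty set $\mathcal S'$ of feasible solutions and a cost function $C:\mathcal S'\to\mathbb R$. Let $N=|\mathcal S'|$. Work in $\mathbb C^N$ with orthonormal basis $\{|z\rangle : z\in\mathcal S'\}$. The problem Hamiltonian is the diagonal matrix $H_C$ with $H_C|z\rangle=C(z)|z\rangle$; the mixing Hamiltonian is the $N\times N$ all-ones matrix $H_M=J$ (equal, up to adding the identity, to the adjacency matrix of the complete graph $K_N$). The DLA of QWOA, $\mathfrak g_{\mathrm{QWOA},\mathcal P}$, for an instance of problem $\mathcal P$ is the real Lie algebra generated by $iH_C$ and $iH_M$, i.e. the smallest real linear subspace of $N\times N$ complex matrices containing $iH_C,iH_M$ and closed under the commutator; its dimension is its real dimension. The class $\mathsf{NPO}$ consists of optimization problems whose solutions have size polynomial in the input size $s$ and whose feasibility and cost can be computed in deterministic polynomial time. $\mathsf{NPO}\text{-}\mathsf{PB}$ consists of $\mathsf{NPO}$ problems whose cost function takes values in a discrete range of size polynomially bounded in $s$ (e.g. integer values in $\{0,1,\dots,r(s)\}$ for a polynomial $r$). *)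

theory Defs
  imports Complex_Main "HOL-Library.Function_Algebras" "HOL-Computational_Algebra.Polynomial"
begin

text \<open>Square complex matrices whose rows and columns are indexed by the feasible
  solutions z \<in> S (the basis vectors |z>) are represented as functions
  'z \<Rightarrow> 'z \<Rightarrow> complex; only the entries on S \<times> S matter.\<close>

type_synonym 'z cmat = "'z \<Rightarrow> 'z \<Rightarrow> complex"

definition mscale :: "real \<Rightarrow> 'z cmat \<Rightarrow> 'z cmat" where
  "mscale r A = (\<lambda>u v. complex_of_real r * A u v)"

definition mmult :: "'z set \<Rightarrow> 'z cmat \<Rightarrow> 'z cmat \<Rightarrow> 'z cmat" where
  "mmult S A B = (\<lambda>u w. \<Sum>v\<in>S. A u v * B v w)"

definition commutator :: "'z set \<Rightarrow> 'z cmat \<Rightarrow> 'z cmat \<Rightarrow> 'z cmat" where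
  "commutator S A B = mmult S A B - mmult S B A"

definition H_C :: "'z set \<Rightarrow> ('z \<Rightarrow> real) \<Rightarrow> 'z cmat" where
  "H_C S C = (\<lambda>u v. if u \<in> S \<and> v = u then complex_of_real (C u) else 0)"

definition H_M :: "'z set \<Rightarrow> 'z cmat" where
  "H_M S = (\<lambda>u v. if u \<in> S \<and> v \<in> S then 1 else 0)"

definition imul :: "'z cmat \<Rightarrow> 'z cmat" where
  "imul A = (\<lambda>u v. \<i> * A u v)"

definition lie_closure :: "'z set \<Rightarrow> 'z cmat set \<Rightarrow> 'z cmat set" where
  "lie_closure S G = \<Inter>{L. module.subspace mscale L \<and> G \<subseteq> L \<and>
       (\<forall>A\<in>L. \<forall>B\<in>L. commutator S A B \<in> L)}"

definition real_dim :: "'z cmat set \<Rightarrow> nat" where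
  "real_dim L = vector_space.dim mscale L"

definition qwoa_dla :: "'z set \<Rightarrow> ('z \<Rightarrow> real) \<Rightarrow> 'z cmat set" where
  "qwoa_dla S C = lie_closure S {imul (H_C S C), imul (H_M S)}"

text \<open>An NPO-PB problem, abstracted: instances are bit strings x in the set I of valid
  instances, with input size s = length x; the feasible solutions feas x are a nonempty
  set of bit strings of length polynomially bounded in s; the cost function cost x
  takes on the feasible solutions a range of values whose size is polynomially bounded
  in s.  (Polynomial-time computability of feasibility/cost is not modelled.)\<close>
definition npo_pb :: "bool list set \<Rightarrow> (bool list \<Rightarrow> bool list set)
    \<Rightarrow> (bool list \<Rightarrow> bool list \<Rightarrow> real) \<Rightarrow> bool" where
  "npo_pb I feas cost \<longleftrightarrow>
     (\<forall>x\<in>I. feas x \<noteq> {}) \<and>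
     (\<exists>p::nat poly. \<forall>x\<in>I. \<forall>z\<in>feas x. length z \<le> poly p (length x)) \<and>
     (\<exists>r::nat poly. \<forall>x\<in>I. card (cost x ` feas x) \<le> poly r (length x))"

end

theory Submission
  imports Defs
begin

interpretation MV: vector_space mscale
  by unfold_locales (auto simp: mscale_def fun_eq_iff algebra_simps)

lemma msub_def: "MV.subspace L \<longleftrightarrow> 0 \<in> L \<and> (\<forall>x\<in>L. \<forall>y\<in>L. x + y \<in> L) \<and> (\<forall>c. \<forall>x\<in>L. mscale c x \<in> L)"
  by (rule module.subspace_def[OF MV.module_axioms])

lemma sum_apply2: "finite P \<Longrightarrow> (\<Sum>p\<in>P. (f p :: 'z cmat)) u v = (\<Sum>p\<in>P. f p u v)"
  by (induction P rule: finite_induct) auto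

definition LL :: "'z set \<Rightarrow> ('z \<Rightarrow> real) \<Rightarrow> 'z cmat set" where
  "LL S C = {A. \<exists>(a::complex) (g::real \<Rightarrow> real \<Rightarrow> complex). \<forall>u v. A u v =
     (if u \<in> S \<and> v \<in> S then (if u = v then a * complex_of_real (C u) else 0) + g (C u) (C v) else 0)}"

lemma prod_formula:
  fixes C :: "'z \<Rightarrow> real"
  assumes "finite S" "u \<in> S" "w \<in> S"
  shows "(\<Sum>v\<in>S. ((if u = v then a * complex_of_real (C u) else 0) + g (C u) (C v)) *
                   ((if v = w then b * complex_of_real (C v) else 0) + h (C v) (C w)))
   = (if u = w then a * b * complex_of_real (C u) * complex_of_real (C u) else 0)
     + a * complex_of_real (C u) * h (C u) (C w) + g (C u) (C w) * b * complex_of_real (C w)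
     + (\<Sum>v\<in>S. g (C u) (C v) * h (C v) (C w))"
proof -
  have e: "((if u = v then a * complex_of_real (C u) else 0) + g (C u) (C v)) *
                   ((if v = w then b * complex_of_real (C v) else 0) + h (C v) (C w))
    = (if v = u then (if u = w then a * b * complex_of_real (C u) * complex_of_real (C u) else 0) else 0)
      + (if v = u then a * complex_of_real (C u) * h (C u) (C w) else 0)
      + (if v = w then g (C u) (C w) * b * complex_of_real (C w) else 0)
      + g (C u) (C v) * h (C v) (C w)" for v
    by (auto simp: algebra_simps)
  show ?thesis
    unfolding e sum.distrib using assms by (simp add: sum.delta)
qed

lemma LL_comm:
  fixes C :: "'z \<Rightarrow> real"
  assumes "finite S" "A \<in> LL S C" "B \<in> LL S C"
  shows "commutator S A B \<in> LL S C"
proof -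
  obtain a g where A: "\<And>u v. A u v =
     (if u \<in> S \<and> v \<in> S then (if u = v then a * complex_of_real (C u) else 0) + g (C u) (C v) else 0)"
    using assms(2) unfolding LL_def by blast
  obtain b h where B: "\<And>u v. B u v =
     (if u \<in> S \<and> v \<in> S then (if u = v then b * complex_of_real (C u) else 0) + h (C u) (C v) else 0)"
    using assms(3) unfolding LL_def by blast
  define k where "k = (\<lambda>x y. a * complex_of_real x * h x y + g x y * b * complex_of_real y
     + (\<Sum>v\<in>S. g x (C v) * h (C v) y)
     - (b * complex_of_real x * g x y + h x y * a * complex_of_real y
     + (\<Sum>v\<in>S. h x (C v) * g (C v) y)))"
  have "commutator S A B u w = (if u \<in> S \<and> w \<in> S then (if u = w then 0 * complex_of_real (C u) else 0) + k (C u) (C w) else 0)" for u w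
  proof (cases "u \<in> S \<and> w \<in> S")
    case True
    have 1: "mmult S A B u w = (\<Sum>v\<in>S. ((if u = v then a * complex_of_real (C u) else 0) + g (C u) (C v)) *
                   ((if v = w then b * complex_of_real (C v) else 0) + h (C v) (C w)))"
      unfolding mmult_def using True by (intro sum.cong) (auto simp: A B)
    have 2: "mmult S B A u w = (\<Sum>v\<in>S. ((if u = v then b * complex_of_real (C u) else 0) + h (C u) (C v)) *
                   ((if v = w then a * complex_of_real (C v) else 0) + g (C v) (C w)))"
      unfolding mmult_def using True by (intro sum.cong) (auto simp: A B)
    show ?thesis using True
      unfolding commutator_def fun_diff_def 1 2 prod_formula[OF assms(1) conjunct1[OF True] conjunct2[OF True]]
      by (simp add: k_def algebra_simps)
  next
    case False
    then show ?thesis unfolding commutator_def mmult_def by (auto simp: A B)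
  qed
  then show ?thesis unfolding LL_def by blast
qed

lemma LL_subspace: "MV.subspace (LL S C)"
  unfolding msub_def
proof (intro conjI ballI allI)
  show "0 \<in> LL S C" unfolding LL_def
    by (rule CollectI, rule exI[of _ 0], rule exI[of _ "\<lambda>_ _. 0"]) auto
next
  fix x y assume "x \<in> LL S C" "y \<in> LL S C"
  then obtain a g b h where A: "\<And>u v. x u v =
     (if u \<in> S \<and> v \<in> S then (if u = v then a * complex_of_real (C u) else 0) + g (C u) (C v) else 0)"
    and B: "\<And>u v. y u v =
     (if u \<in> S \<and> v \<in> S then (if u = v then b * complex_of_real (C u) else 0) + h (C u) (C v) else 0)"
    unfolding LL_def by blast
  show "x + y \<in> LL S C" unfolding LL_def
    by (rule CollectI, rule exI[of _ "a+b"], rule exI[of _ "\<lambda>s t. g s t + h s t"]) (auto simp: A B algebra_simps)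
next
  fix c x assume "x \<in> LL S C"
  then obtain a g where A: "\<And>u v. x u v =
     (if u \<in> S \<and> v \<in> S then (if u = v then a * complex_of_real (C u) else 0) + g (C u) (C v) else 0)"
    unfolding LL_def by blast
  show "mscale c x \<in> LL S C" unfolding LL_def
    by (rule CollectI, rule exI[of _ "c*a"], rule exI[of _ "\<lambda>s t. c * g s t"]) (auto simp: A mscale_def algebra_simps)
qed

lemma LL_gen1: "imul (H_C S C) \<in> LL S C"
  unfolding LL_def
  by (rule CollectI, rule exI[of _ \<i>], rule exI[of _ "\<lambda>_ _. 0"]) (auto simp: imul_def H_C_def)

lemma LL_gen2: "imul (H_M S) \<in> LL S C"
  unfolding LL_def
  by (rule CollectI, rule exI[of _ 0], rule exI[of _ "\<lambda>_ _. \<i>"]) (auto simp: imul_def H_M_def)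

lemmas LL_gens = LL_gen1 LL_gen2

lemma closure_LL: "finite S \<Longrightarrow> qwoa_dla S C \<subseteq> LL S C"
  unfolding qwoa_dla_def lie_closure_def
  using LL_subspace LL_gens LL_comm by blast


definition EE :: "'z set \<Rightarrow> ('z \<Rightarrow> real) \<Rightarrow> real \<Rightarrow> real \<Rightarrow> 'z cmat" where
  "EE S C c d = (\<lambda>u v. if u \<in> S \<and> v \<in> S \<and> C u = c \<and> C v = d then 1 else 0)"

definition cs :: "complex \<Rightarrow> 'z cmat \<Rightarrow> 'z cmat" where
  "cs z X = mscale (Re z) X + mscale (Im z) (imul X)"

lemma cs_apply: "cs z X u v = z * X u v"
proof -
  have "cs z X u v = (complex_of_real (Re z) + \<i> * complex_of_real (Im z)) * X u v"
    by (simp add: cs_def mscale_def imul_def algebra_simps)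
  also have "complex_of_real (Re z) + \<i> * complex_of_real (Im z) = z"
    using complex_eq[of z] by simp
  finally show ?thesis .
qed

definition WW :: "'z set \<Rightarrow> ('z \<Rightarrow> real) \<Rightarrow> 'z cmat set" where
  "WW S C = (\<lambda>p. EE S C (fst p) (snd p)) ` (C ` S \<times> C ` S)
     \<union> (\<lambda>p. imul (EE S C (fst p) (snd p))) ` (C ` S \<times> C ` S) \<union> {H_C S C, imul (H_C S C)}"

lemma cs_span: "X \<in> W \<Longrightarrow> imul X \<in> W \<Longrightarrow> cs z X \<in> MV.span W"
  unfolding cs_def by (intro MV.span_add MV.span_scale MV.span_base)

lemma LL_span:
  assumes "finite S"
  shows "LL S C \<subseteq> MV.span (WW S C)"
proof
  fix A assume "A \<in> LL S C"
  then obtain a g where A: "\<And>u v. A u v =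
     (if u \<in> S \<and> v \<in> S then (if u = v then a * complex_of_real (C u) else 0) + g (C u) (C v) else 0)"
    unfolding LL_def by blast
  let ?K = "C ` S \<times> C ` S"
  have fK: "finite ?K" using assms by simp
  define B where "B = (\<Sum>p\<in>?K. cs (g (fst p) (snd p)) (EE S C (fst p) (snd p))) + cs a (H_C S C)"
  have "B \<in> MV.span (WW S C)"
    unfolding B_def
    by (intro MV.span_add MV.span_sum cs_span) (auto simp: WW_def)
  moreover have "A = B"
  proof (intro ext)
    fix u v
    have "B u v = (\<Sum>p\<in>?K. g (fst p) (snd p) * EE S C (fst p) (snd p) u v) + a * H_C S C u v"
      unfolding B_def by (simp add: sum_apply2[OF fK] cs_apply)
    also have "(\<Sum>p\<in>?K. g (fst p) (snd p) * EE S C (fst p) (snd p) u v)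
       = (\<Sum>p\<in>?K. if p = (C u, C v) then (if u \<in> S \<and> v \<in> S then g (C u) (C v) else 0) else 0)"
      by (intro sum.cong) (auto simp: EE_def)
    also have "\<dots> = (if u \<in> S \<and> v \<in> S then g (C u) (C v) else 0)"
      using sum.delta[OF fK, of "(C u, C v)" "\<lambda>_. g (C u) (C v)"] by auto
    finally show "A u v = B u v" by (auto simp: A H_C_def)
  qed
  ultimately show "A \<in> MV.span (WW S C)" by simp
qed

lemma card_WW:
  assumes "finite S"
  shows "card (WW S C) \<le> 2 * card (C ` S) * card (C ` S) + 2"
proof -
  let ?K = "C ` S \<times> C ` S"
  have "card (WW S C) \<le> card ((\<lambda>p. EE S C (fst p) (snd p)) ` ?K
     \<union> (\<lambda>p. imul (EE S C (fst p) (snd p))) ` ?K) + card {H_C S C, imul (H_C S C)}"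
    unfolding WW_def by (rule card_Un_le)
  also have "\<dots> \<le> (card ((\<lambda>p. EE S C (fst p) (snd p)) ` ?K)
     + card ((\<lambda>p. imul (EE S C (fst p) (snd p))) ` ?K)) + 2"
    by (intro add_mono card_Un_le) (auto simp: card_insert_if)
  also have "\<dots> \<le> (card ?K + card ?K) + 2"
    by (intro add_mono card_image_le) (auto simp: assms)
  finally show ?thesis by (simp add: card_cartesian_product)
qed

lemma dim_bound:
  assumes "finite S"
  shows "real_dim (qwoa_dla S C) \<le> 2 * card (C ` S) * card (C ` S) + 2"
proof -
  have "qwoa_dla S C \<subseteq> MV.span (WW S C)"
    using closure_LL[OF assms] LL_span[OF assms] by blast
  moreover have "finite (WW S C)" using assms by (simp add: WW_def)
  ultimately have "real_dim (qwoa_dla S C) \<le> card (WW S C)"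
    unfolding real_dim_def by (rule MV.dim_le_card)
  then show ?thesis using card_WW[OF assms, of C] by linarith
qed

theorem corollary1:
  fixes I :: "bool list set"
    and feas :: "bool list \<Rightarrow> bool list set"
    and cost :: "bool list \<Rightarrow> bool list \<Rightarrow> real"
  assumes "npo_pb I feas cost"
  shows "\<exists>q::nat poly. \<forall>x\<in>I. real_dim (qwoa_dla (feas x) (cost x)) \<le> poly q (length x)"
proof -
  obtain p r :: "nat poly" where p: "\<forall>x\<in>I. \<forall>z\<in>feas x. length z \<le> poly p (length x)"
    and r: "\<forall>x\<in>I. card (cost x ` feas x) \<le> poly r (length x)"
    using assms unfolding npo_pb_def by blast
  show ?thesis
  proof (intro exI[of _ "[:2:] * r * r + [:2:]"] ballI)
    fix x assume x: "x \<in> I"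
    have "feas x \<subseteq> {xs. set xs \<subseteq> UNIV \<and> length xs \<le> poly p (length x)}"
      using p x by auto
    moreover have "finite {xs::bool list. set xs \<subseteq> UNIV \<and> length xs \<le> poly p (length x)}"
      by (rule finite_lists_length_le) simp
    ultimately have fin: "finite (feas x)" by (rule finite_subset)
    have k: "card (cost x ` feas x) \<le> poly r (length x)" using r x by blast
    have "real_dim (qwoa_dla (feas x) (cost x)) \<le> 2 * card (cost x ` feas x) * card (cost x ` feas x) + 2"
      by (rule dim_bound[OF fin])
    also have "\<dots> \<le> 2 * poly r (length x) * poly r (length x) + 2"
      using k by (intro add_mono mult_mono) auto
    finally show "real_dim (qwoa_dla (feas x) (cost x)) \<le> poly ([:2:] * r * r + [:2:]) (length x)"
      by simp
  qed
qed

end
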